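(* For all positive integers $r,k$, let $p$ be the smallest prime with $2k^2r^2<p$ and let $n=rp$. Then there exists a binary $(r,k)$-batch code of dimension $n$ and rate $\frac{r}{r+k}$; its redundancy equals $kp$.
   Context: A binary linear code of length $N$ encoding $n$ information bits $x_1,\dots,x_n$ is an $(r,k)$-batch code if for every multiset $\{i_1,\dots,i_k\}$ of indices there exist $k$ mutually disjoint sets $R_1,\dots,R_k$ of coordinates, each of size at most $r$, such that $x_{i_j}$ is a function of the codeword bits indexed by $R_j$. Its rate is $n/N$ and its redundancy is $N-n$. *)

theory Defs
  imports Complex_Main "HOL-Library.Z2" "HOL-Computational_Algebra.Primes"
begin

text \<open>The message is x (only x i for i < n matters); the codeword bit at
  coordinate j < N is the GF(2)-sum over i < n of x i * G i j.\<close>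

definition encode :: "nat \<Rightarrow> (nat \<Rightarrow> nat \<Rightarrow> bit) \<Rightarrow> (nat \<Rightarrow> bit) \<Rightarrow> nat \<Rightarrow> bit" where
  "encode n G x = (\<lambda>j. \<Sum>i<n. x i * G i j)"

definition recoverable_from ::
  "nat \<Rightarrow> (nat \<Rightarrow> nat \<Rightarrow> bit) \<Rightarrow> nat \<Rightarrow> nat set \<Rightarrow> bool" where
  "recoverable_from n G i R \<longleftrightarrow>
     (\<exists>g :: (nat \<Rightarrow> bit) \<Rightarrow> bit. \<forall>x. x i = g (\<lambda>j. if j \<in> R then encode n G x j else 0))"

text \<open>(r,k)-batch code: for every multiset {i_1,...,i_k} of indices (given as a list
  of length k with entries < n) there are pairwise disjoint coordinate sets
  R_1..R_k of size at most r such that x_{i_j} is recoverable from R_j.\<close>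
definition batch_code ::
  "nat \<Rightarrow> nat \<Rightarrow> nat \<Rightarrow> nat \<Rightarrow> (nat \<Rightarrow> nat \<Rightarrow> bit) \<Rightarrow> bool" where
  "batch_code r k n N G \<longleftrightarrow>
     (\<forall>is. length is = k \<and> set is \<subseteq> {..<n} \<longrightarrow>
        (\<exists>R :: nat \<Rightarrow> nat set.
           (\<forall>j<k. R j \<subseteq> {..<N} \<and> card (R j) \<le> r \<and> recoverable_from n G (is ! j) (R j)) \<and>
           (\<forall>j<k. \<forall>j'<k. j \<noteq> j' \<longrightarrow> R j \<inter> R j' = {})))"

end

theory Submission
  imports Defs
begin

lemma small_dvd_zero: fixes x :: int assumes "int p dvd x" "\<bar>x\<bar> < int p" shows "x = 0"
  using dvd_imp_le_int[of x "int p"] assms by fastforce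

lemma absdiff: "(x::nat) < p \<Longrightarrow> y < p \<Longrightarrow> \<bar>int x - int y\<bar> < int p" by (cases "x \<le> y") auto



lemma slope_step:
  fixes s :: "nat \<Rightarrow> nat" and m r p :: nat
  assumes p: "prime p" and big: "m + m * m * (r * (2 * r - 1)) < p" and r2: "2 * r < p"
    and slt: "\<forall>t<m. s t < p"
  shows "\<exists>v<p. (\<forall>i<m. v \<noteq> s i) \<and> (\<forall>i j di dj dn. i < m \<longrightarrow> j < m \<longrightarrow> di + dj + dn = 0 \<longrightarrow>
      \<bar>di\<bar> < int r \<longrightarrow> \<bar>dj\<bar> < int r \<longrightarrow> int p dvd (di * int (s i) + dj * int (s j) + dn * int v) \<longrightarrow> dn = 0)"
proof -
  define T where "T = {..<m} \<times> {..<m} \<times> {0..<int r} \<times> {1 - int r..<int r}"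
  define S where "S \<tau> = {v. v < p \<and> (case \<tau> of (i, j, a, b) \<Rightarrow> a + b \<noteq> 0 \<and> int p dvd (a * int (s i) + b * int (s j) - (a + b) * int v))}" for \<tau>
  define Bad where "Bad = s ` {..<m} \<union> (\<Union>\<tau>\<in>T. S \<tau>)"
  have finT: "finite T" unfolding T_def by simp
  have cardT: "card T = m * m * (r * (2 * r - 1))"
  proof -
    have "card {0..<int r} = r" by simp
    moreover have "card {1 - int r..<int r} = 2 * r - 1" by simp
    ultimately show ?thesis unfolding T_def by (simp add: card_cartesian_product)
  qed
  have pr: "prime (int p)" using p by simp
  have S1: "card (S \<tau>) \<le> 1" if tT: "\<tau> \<in> T" for \<tau>
  proof -
    obtain i j a b where tau: "\<tau> = (i, j, a, b)" by (cases \<tau>) auto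
    have ab: "0 \<le> a" "a < int r" "1 - int r \<le> b" "b < int r" using tT unfolding tau T_def by auto
    have fin: "finite (S \<tau>)" unfolding S_def by simp
    have "v1 = v2" if v1: "v1 \<in> S \<tau>" and v2: "v2 \<in> S \<tau>" for v1 v2
    proof -
      have h1: "a + b \<noteq> 0" "int p dvd (a * int (s i) + b * int (s j) - (a + b) * int v1)" "v1 < p"
        using v1 unfolding S_def tau by auto
      have h2: "int p dvd (a * int (s i) + b * int (s j) - (a + b) * int v2)" "v2 < p"
        using v2 unfolding S_def tau by auto
      have "int p dvd (a * int (s i) + b * int (s j) - (a + b) * int v1) - (a * int (s i) + b * int (s j) - (a + b) * int v2)"
        using h1(2) h2(1) by (rule dvd_diff)
      moreover have "(a * int (s i) + b * int (s j) - (a + b) * int v1) - (a * int (s i) + b * int (s j) - (a + b) * int v2)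
          = (a + b) * (int v2 - int v1)" by (simp add: algebra_simps)
      ultimately have "int p dvd (a + b) * (int v2 - int v1)" by simp
      hence dd: "int p dvd (a + b) \<or> int p dvd (int v2 - int v1)" using pr prime_dvd_mult_iff by blast
      have "\<bar>a + b\<bar> < int p" using r2 ab by linarith
      hence "\<not> int p dvd (a + b)" using small_dvd_zero h1(1) by blast
      hence "int p dvd (int v2 - int v1)" using dd by blast
      moreover have "\<bar>int v2 - int v1\<bar> < int p" using h2(2) h1(3) by (rule absdiff)
      ultimately have "int v2 - int v1 = 0" by (rule small_dvd_zero)
      thus ?thesis by simp
    qed
    then show ?thesis using fin by (simp add: card_le_Suc0_iff_eq)
  qed
  have "card Bad \<le> card (s ` {..<m}) + card (\<Union>\<tau>\<in>T. S \<tau>)" unfolding Bad_def by (rule card_Un_le)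
  also have "card (s ` {..<m}) \<le> m" using card_image_le[of "{..<m}" s] by simp
  also have "card (\<Union>\<tau>\<in>T. S \<tau>) \<le> (\<Sum>\<tau>\<in>T. card (S \<tau>))" using finT by (rule card_UN_le)
  also have "\<dots> \<le> (\<Sum>\<tau>\<in>T. 1)" by (rule sum_mono) (rule S1)
  also have "\<dots> = m * m * (r * (2 * r - 1))" using cardT by simp
  finally have cB: "card Bad < p" using big by linarith
  have "{..<p} - Bad \<noteq> {}"
  proof
    assume "{..<p} - Bad = {}"
    hence "{..<p} \<subseteq> Bad" by blast
    moreover have "finite Bad"
    proof -
      have "Bad \<subseteq> s ` {..<m} \<union> {..<p}" unfolding Bad_def S_def by auto
      thus ?thesis by (rule finite_subset) simp
    qed
    ultimately have "card {..<p} \<le> card Bad" by (intro card_mono)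
    hence "p \<le> card Bad" by simp
    with cB show False by simp
  qed
  then obtain v where v: "v < p" "v \<notin> Bad" by blast
  have Sin: "v \<in> S (i, j, a, b)" if "v < p" "int p dvd a * int (s i) + b * int (s j) - (a + b) * int v" "a + b \<noteq> 0" for v i j a b
    unfolding S_def using that by simp
  have A: "\<forall>i<m. v \<noteq> s i" using v unfolding Bad_def by auto
  have B: "dn = 0" if i: "i < m" and j: "j < m" and sum0: "di + dj + dn = 0" and bi: "\<bar>di\<bar> < int r" and bj: "\<bar>dj\<bar> < int r"
     and dv: "int p dvd (di * int (s i) + dj * int (s j) + dn * int v)" for i j di dj dn
  proof (rule ccontr)
    assume dn: "dn \<noteq> 0"
    have "\<exists>\<tau>\<in>T. v \<in> S \<tau>"
    proof (cases "0 \<le> di")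
      case True
      have "(i, j, di, dj) \<in> T" unfolding T_def using i j True bi bj by auto
      moreover have eq: "di * int (s i) + dj * int (s j) + dn * int v = di * int (s i) + dj * int (s j) - (di + dj) * int v"
        using sum0 by algebra
      have "int p dvd di * int (s i) + dj * int (s j) - (di + dj) * int v" using dv by (simp only: eq)
      hence "v \<in> S (i, j, di, dj)" by (rule Sin[OF v(1)]) (use dn sum0 in linarith)
      ultimately show ?thesis by blast
    next
      case di: False
      show ?thesis
      proof (cases "0 \<le> dj")
        case True
        have "(j, i, dj, di) \<in> T" unfolding T_def using i j True bi bj di by auto
        moreover have eq: "di * int (s i) + dj * int (s j) + dn * int v = dj * int (s j) + di * int (s i) - (dj + di) * int v"
          using sum0 by algebra
        have "int p dvd dj * int (s j) + di * int (s i) - (dj + di) * int v" using dv by (simp only: eq)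
        hence "v \<in> S (j, i, dj, di)" by (rule Sin[OF v(1)]) (use dn sum0 in linarith)
        ultimately show ?thesis by blast
      next
        case False
        have "(i, j, - di, - dj) \<in> T" unfolding T_def using i j False bi bj di by auto
        moreover have eq: "- di * int (s i) + - dj * int (s j) - (- di + - dj) * int v = - (di * int (s i) + dj * int (s j) + dn * int v)"
          using sum0 by algebra
        have "int p dvd - di * int (s i) + - dj * int (s j) - (- di + - dj) * int v" unfolding eq using dv by (rule dvd_minus_iff[THEN iffD2])
        hence "v \<in> S (i, j, - di, - dj)" by (rule Sin[OF v(1)]) (use dn sum0 in linarith)
        ultimately show ?thesis by blast
      qed
    qed
    with v(2) show False unfolding Bad_def by blast
  qed
  show ?thesis
    by (rule exI[of _ v], intro conjI v(1) A allI impI, rule B) 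
qed


lemma pair0: assumes p: "prime p" and "a < p" "b < p" "a \<noteq> b" "\<bar>d\<bar> < int p" "int p dvd d * (int a - int b)"
  shows "d = 0"
proof -
  have pr: "prime (int p)" using p by simp
  have "int p dvd d \<or> int p dvd (int a - int b)" using assms(6) pr prime_dvd_mult_iff by blast
  moreover have "\<bar>int a - int b\<bar> < int p" using assms(2,3) by (rule absdiff)
  hence "\<not> int p dvd (int a - int b)"
  proof (intro notI)
    assume "int p dvd (int a - int b)" "\<bar>int a - int b\<bar> < int p"
    hence "int a - int b = 0" by (intro small_dvd_zero)
    with assms(4) show False by simp
  qed
  ultimately have "int p dvd d" by blast
  thus ?thesis using assms(5) by (rule small_dvd_zero)
qed

definition scond :: "nat \<Rightarrow> nat \<Rightarrow> nat \<Rightarrow> (nat \<Rightarrow> nat) \<Rightarrow> bool" where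
  "scond r p m s \<longleftrightarrow> (\<forall>t1 t2 t3 d1 d2 d3. t1 < m \<longrightarrow> t2 < m \<longrightarrow> t3 < m \<longrightarrow> t1 \<noteq> t2 \<longrightarrow> t1 \<noteq> t3 \<longrightarrow> t2 \<noteq> t3
     \<longrightarrow> d1 + d2 + d3 = 0 \<longrightarrow> \<bar>d1\<bar> < int r \<longrightarrow> \<bar>d2\<bar> < int r \<longrightarrow> \<bar>d3\<bar> < int r
     \<longrightarrow> int p dvd (d1 * int (s t1) + d2 * int (s t2) + d3 * int (s t3)) \<longrightarrow> d1 = 0 \<and> d2 = 0)"

lemma tri_new:
  fixes s :: "nat \<Rightarrow> nat"
  assumes p: "prime p" and r2: "2 * r < p"
    and slt: "\<forall>t<m. s t < p" and sinj: "\<forall>t t'. t < m \<longrightarrow> t' < m \<longrightarrow> s t = s t' \<longrightarrow> t = t'"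
    and V: "\<forall>i j di dj dn. i < m \<longrightarrow> j < m \<longrightarrow> di + dj + dn = 0 \<longrightarrow>
      \<bar>di\<bar> < int r \<longrightarrow> \<bar>dj\<bar> < int r \<longrightarrow> int p dvd (di * int (s i) + dj * int (s j) + dn * int v) \<longrightarrow> dn = 0"
    and ij: "i < m" "j < m" "i \<noteq> j" and sum0: "di + dj + dn = 0" and b: "\<bar>di\<bar> < int r" "\<bar>dj\<bar> < int r"
    and dv: "int p dvd (di * int (s i) + dj * int (s j) + dn * int v)"
  shows "di = 0 \<and> dj = 0 \<and> dn = 0"
proof -
  have dn: "dn = 0" using V ij sum0 b dv by blast
  hence dj: "dj = - di" using sum0 by simp
  have "di * int (s i) + dj * int (s j) + dn * int v = di * (int (s i) - int (s j))"
    using dn dj by (simp add: algebra_simps)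
  hence "int p dvd di * (int (s i) - int (s j))" using dv by simp
  moreover have "s i \<noteq> s j" using sinj ij by blast
  moreover have "\<bar>di\<bar> < int p" using b r2 by linarith
  ultimately have "di = 0" using pair0[OF p] slt ij by blast
  thus ?thesis using dn dj by simp
qed

lemma arith_bound: fixes m k r :: nat assumes "m < k" "0 < r"
  shows "m + m * m * (r * (2 * r - 1)) < 2 * k^2 * r^2"
proof -
  have "r * (2 * r - 1) \<le> 2 * r * r" by (simp add: diff_le_self)
  hence a: "m * m * (r * (2 * r - 1)) \<le> m * m * (2 * r * r)" by (rule mult_le_mono2)
  have "(m + 1) * (m + 1) \<le> k * k" using assms(1) by (intro mult_le_mono) auto
  hence "((m + 1) * (m + 1)) * (2 * (r * r)) \<le> (k * k) * (2 * (r * r))" by (rule mult_le_mono1)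
  hence b: "2 * ((m + 1) * (m + 1)) * (r * r) \<le> 2 * (k * k) * (r * r)" by (simp only: ac_simps)
  have "1 \<le> r * r" using assms(2) by simp
  hence "m \<le> 4 * m * (r * r)" by simp
  moreover have "0 < 2 * (r * r)" using assms(2) by simp
  moreover have e: "2 * ((m + 1) * (m + 1)) * (r * r) = m * m * (2 * r * r) + 4 * m * (r * r) + 2 * (r * r)"
    by (simp add: algebra_simps)
  ultimately have c: "m * m * (2 * r * r) + m < 2 * ((m + 1) * (m + 1)) * (r * r)"
    by linarith
  have "2 * k^2 * r^2 = 2 * (k * k) * (r * r)" by (simp add: power2_eq_square)
  with a b c show ?thesis by linarith
qed

lemma slopes_ind:
  fixes k r p :: nat
  assumes p: "prime p" and r: "0 < r" and big: "2 * k^2 * r^2 < p"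
  shows "m \<le> k \<Longrightarrow> \<exists>s. (\<forall>t<m. s t < p) \<and> (\<forall>t t'. t < m \<longrightarrow> t' < m \<longrightarrow> s t = s t' \<longrightarrow> t = t') \<and> scond r p m s"
proof (induction m)
  case 0
  show ?case by (rule exI[of _ "\<lambda>_. 0"]) (simp add: scond_def)
next
  case (Suc m)
  hence mk: "m < k" by simp
  then obtain s where slt: "\<forall>t<m. s t < p" and sinj: "\<forall>t t'. t < m \<longrightarrow> t' < m \<longrightarrow> s t = s t' \<longrightarrow> t = t'"
    and sc: "scond r p m s" using Suc.IH by auto
  have k1: "1 \<le> k" using mk by simp
  have "r \<le> k^2 * r^2"
  proof -
    have "1 * r \<le> k^2 * (r * r)" using k1 r by (intro mult_le_mono) (auto simp: power2_eq_square)
    thus ?thesis by (simp add: power2_eq_square)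
  qed
  hence r2: "2 * r < p" using big by linarith
  have bm: "m + m * m * (r * (2 * r - 1)) < p" using arith_bound[OF mk r] big by linarith
  obtain v where v: "v < p" "\<forall>i<m. v \<noteq> s i"
    and V: "\<forall>i j di dj dn. i < m \<longrightarrow> j < m \<longrightarrow> di + dj + dn = 0 \<longrightarrow>
      \<bar>di\<bar> < int r \<longrightarrow> \<bar>dj\<bar> < int r \<longrightarrow> int p dvd (di * int (s i) + dj * int (s j) + dn * int v) \<longrightarrow> dn = 0"
    using slope_step[OF p bm r2 slt] by blast
  define s' where "s' = s(m := v)"
  note TN = tri_new[OF p r2 slt sinj V]
  have "\<forall>t<Suc m. s' t < p" using slt v unfolding s'_def by auto
  moreover have "\<forall>t t'. t < Suc m \<longrightarrow> t' < Suc m \<longrightarrow> s' t = s' t' \<longrightarrow> t = t'"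
    using sinj v unfolding s'_def by (auto simp: less_Suc_eq)
  moreover have "scond r p (Suc m) s'"
    unfolding scond_def
  proof (intro allI impI)
    fix t1 t2 t3 d1 d2 d3
    assume t: "t1 < Suc m" "t2 < Suc m" "t3 < Suc m" "t1 \<noteq> t2" "t1 \<noteq> t3" "t2 \<noteq> t3"
      and sum0: "d1 + d2 + d3 = 0" and b: "\<bar>d1\<bar> < int r" "\<bar>d2\<bar> < int r" "\<bar>d3\<bar> < int r"
      and dv: "int p dvd (d1 * int (s' t1) + d2 * int (s' t2) + d3 * int (s' t3))"
    show "d1 = 0 \<and> d2 = 0"
    proof (cases "t1 = m")
      case True
      hence lt: "t2 < m" "t3 < m" using t by auto
      have h: "s' t1 = v" "s' t2 = s t2" "s' t3 = s t3" using True t unfolding s'_def by auto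
      have eq: "d1 * int (s' t1) + d2 * int (s' t2) + d3 * int (s' t3) = d2 * int (s t2) + d3 * int (s t3) + d1 * int v"
        unfolding h by algebra
      have dv': "int p dvd d2 * int (s t2) + d3 * int (s t3) + d1 * int v" using dv by (simp only: eq)
      have s0: "d2 + d3 + d1 = 0" using sum0 by linarith
      have "d2 = 0 \<and> d3 = 0 \<and> d1 = 0" by (rule TN[OF lt t(6) s0 b(2) b(3) dv'])
      thus ?thesis by simp
    next
      case n1: False
      show ?thesis
      proof (cases "t2 = m")
        case True
        hence lt: "t1 < m" "t3 < m" using t n1 by auto
        have h: "s' t2 = v" "s' t1 = s t1" "s' t3 = s t3" using True t unfolding s'_def by auto
        have eq: "d1 * int (s' t1) + d2 * int (s' t2) + d3 * int (s' t3) = d1 * int (s t1) + d3 * int (s t3) + d2 * int v"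
          unfolding h by algebra
        have dv': "int p dvd d1 * int (s t1) + d3 * int (s t3) + d2 * int v" using dv by (simp only: eq)
        have s0: "d1 + d3 + d2 = 0" using sum0 by linarith
        have "d1 = 0 \<and> d3 = 0 \<and> d2 = 0" by (rule TN[OF lt t(5) s0 b(1) b(3) dv'])
        thus ?thesis by simp
      next
        case n2: False
        show ?thesis
        proof (cases "t3 = m")
          case True
          hence lt: "t1 < m" "t2 < m" using t n1 n2 by auto
          have h: "s' t3 = v" "s' t1 = s t1" "s' t2 = s t2" using True t unfolding s'_def by auto
          have dv': "int p dvd d1 * int (s t1) + d2 * int (s t2) + d3 * int v" using dv unfolding h .
          have "d1 = 0 \<and> d2 = 0 \<and> d3 = 0" by (rule TN[OF lt t(4) sum0 b(1) b(2) dv'])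
          thus ?thesis by simp
        next
          case n3: False
          have lt: "t1 < m" "t2 < m" "t3 < m" using t n1 n2 n3 by auto
          have h: "s' t1 = s t1" "s' t2 = s t2" "s' t3 = s t3" using n1 n2 n3 unfolding s'_def by auto
          have dv': "int p dvd d1 * int (s t1) + d2 * int (s t2) + d3 * int (s t3)" using dv unfolding h .
          show ?thesis using sc lt t(4-6) sum0 b dv' unfolding scond_def by blast
        qed
      qed
    qed
  qed
  ultimately show ?case by blast
qed




lemma dvd_comb4: "(m::int) dvd A \<Longrightarrow> m dvd B \<Longrightarrow> m dvd C \<Longrightarrow> m dvd D \<Longrightarrow> m dvd A - B - C + D"
  by (simp add: dvd_add dvd_diff)
lemma dvd_comb6: "(m::int) dvd A \<Longrightarrow> m dvd B \<Longrightarrow> m dvd C \<Longrightarrow> m dvd D \<Longrightarrow> m dvd E \<Longrightarrow> m dvd F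
   \<Longrightarrow> m dvd A - B - C + D + E - F"
  by (simp add: dvd_add dvd_diff)

lemma greedy:
  fixes k K :: nat and Forb :: "nat \<Rightarrow> (nat \<Rightarrow> nat) \<Rightarrow> nat set"
  assumes cardb: "\<And>j f. j < K \<Longrightarrow> card (Forb j f \<inter> {..<k}) < k"
    and loc: "\<And>j f g. (\<forall>j'<j. f j' = g j') \<Longrightarrow> Forb j f = Forb j g"
  shows "\<exists>f. \<forall>j<K. f j < k \<and> f j \<notin> Forb j f"
  using cardb
proof (induction K)
  case 0 then show ?case by auto
next
  case (Suc K)
  then obtain f where f: "\<forall>j<K. f j < k \<and> f j \<notin> Forb j f" by auto
  have c: "card (Forb K f \<inter> {..<k}) < card {..<k}" using Suc.prems[of K] by simp
  have "{..<k} - (Forb K f \<inter> {..<k}) \<noteq> {}"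
  proof
    assume "{..<k} - (Forb K f \<inter> {..<k}) = {}"
    hence "{..<k} \<subseteq> Forb K f \<inter> {..<k}" by blast
    hence "card {..<k} \<le> card (Forb K f \<inter> {..<k})" by (intro card_mono) auto
    with c show False by simp
  qed
  then obtain v where v: "v < k" "v \<notin> Forb K f" by auto
  define g where "g = f(K := v)"
  have "\<forall>j<Suc K. g j < k \<and> g j \<notin> Forb j g"
  proof (intro allI impI)
    fix j assume j: "j < Suc K"
    have "Forb j g = Forb j f" using j by (intro loc) (auto simp: g_def)
    then show "g j < k \<and> g j \<notin> Forb j g" using f v j
      by (cases "j = K") (auto simp: g_def)
  qed
  then show ?case by blast
qed

locale geo =
  fixes r k p :: nat and s :: "nat \<Rightarrow> nat"
  assumes p_prime: "prime p" and rpos: "0 < r" and kpos: "0 < k" and r_lt: "r < p"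
  and s_lt: "\<And>t. t < k \<Longrightarrow> s t < p"
  and s_inj: "\<And>t t'. t < k \<Longrightarrow> t' < k \<Longrightarrow> s t = s t' \<Longrightarrow> t = t'"
  and SC: "\<And>t1 t2 t3 d1 d2 d3. t1 < k \<Longrightarrow> t2 < k \<Longrightarrow> t3 < k \<Longrightarrow> t1 \<noteq> t2 \<Longrightarrow> t1 \<noteq> t3 \<Longrightarrow> t2 \<noteq> t3
     \<Longrightarrow> d1 + d2 + d3 = 0 \<Longrightarrow> \<bar>d1\<bar> < int r \<Longrightarrow> \<bar>d2\<bar> < int r \<Longrightarrow> \<bar>d3\<bar> < int r
     \<Longrightarrow> int p dvd (d1 * int (s t1) + d2 * int (s t2) + d3 * int (s t3)) \<Longrightarrow> d1 = 0 \<and> d2 = 0"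
begin

definition "n = r * p"

definition on :: "nat \<Rightarrow> nat \<Rightarrow> nat \<Rightarrow> bool" where
  "on t c i \<longleftrightarrow> i < n \<and> (int c + int (s t) * int (i div p)) mod int p = int (i mod p)"

definition ic :: "nat \<Rightarrow> nat \<Rightarrow> nat" where
  "ic t i = nat ((int (i mod p) - int (s t) * int (i div p)) mod int p)"

definition LS :: "nat \<Rightarrow> nat \<Rightarrow> nat set" where
  "LS t i = {j. on t (ic t i) j}"

lemma ppos: "0 < p" using r_lt by simp

lemma ic_lt: "ic t i < p"
  using ppos unfolding ic_def by (simp add: nat_less_iff)

lemma row_lt: "i < n \<Longrightarrow> i div p < r"
  unfolding n_def by (simp add: less_mult_imp_div_less)

lemma on_dvd: "on t c i \<longleftrightarrow> i < n \<and> int p dvd (int c + int (s t) * int (i div p) - int (i mod p))"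
proof -
  have "int (i mod p) = int (i mod p) mod int p" using ppos by (simp add: zmod_int[symmetric])
  then show ?thesis unfolding on_def
    by (metis mod_eq_dvd_iff)
qed

lemma on_ic: assumes "c < p" shows "on t c i \<longleftrightarrow> i < n \<and> c = ic t i"
proof -
  have "int c = int c mod int p" using assms by simp
  hence "(int c = (int (i mod p) - int (s t) * int (i div p)) mod int p) \<longleftrightarrow>
        int p dvd (int c - (int (i mod p) - int (s t) * int (i div p)))"
    by (metis mod_eq_dvd_iff)
  moreover have "c = ic t i \<longleftrightarrow> int c = (int (i mod p) - int (s t) * int (i div p)) mod int p"
    unfolding ic_def using ppos by auto
  ultimately show ?thesis unfolding on_dvd by (auto simp: algebra_simps)
qed

lemma on_LS: "j \<in> LS t i \<longleftrightarrow> on t (ic t i) j" unfolding LS_def by simp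

lemma LS_eq: "j \<in> LS t i \<longleftrightarrow> j < n \<and> ic t j = ic t i"
  using on_ic[OF ic_lt] on_LS by auto

lemma self_LS: "i < n \<Longrightarrow> i \<in> LS t i" using LS_eq by auto

lemma LS_sub: "LS t i \<subseteq> {..<n}" using LS_eq by auto

lemma LS_same: "j \<in> LS t i \<Longrightarrow> LS t j = LS t i" using LS_eq by auto

lemma LS_sym: "j \<in> LS t i \<Longrightarrow> i < n \<Longrightarrow> i \<in> LS t j" using LS_eq by auto


lemma same_row: assumes "on t c z" "on t c w" "z div p = w div p" shows "z = w"
proof -
  have "int p dvd (int c + int (s t) * int (z div p) - int (z mod p)) - (int c + int (s t) * int (w div p) - int (w mod p))"
    using assms(1,2) unfolding on_dvd using dvd_diff by blast
  moreover have "(int c + int (s t) * int (z div p) - int (z mod p)) - (int c + int (s t) * int (w div p) - int (w mod p))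
    = int (w mod p) - int (z mod p)" using assms(3) by simp
  ultimately have "int p dvd (int (w mod p) - int (z mod p))" by simp
  moreover have "\<bar>int (w mod p) - int (z mod p)\<bar> < int p" using ppos by (intro absdiff) auto
  ultimately have "int (w mod p) - int (z mod p) = 0" by (rule small_dvd_zero)
  hence "z mod p = w mod p" by simp
  moreover have "z = z div p * p + z mod p" "w = w div p * p + w mod p" by simp_all
  ultimately show ?thesis using assms(3) by metis
qed

lemma two_lines: assumes "t < k" "t' < k" "t \<noteq> t'" "on t c z" "on t' c' z" "on t c w" "on t' c' w"
  shows "z = w"
proof -
  define a where "a = int (z div p)"
  define a' where "a' = int (w div p)"
  define b where "b = int (z mod p)"
  define b' where "b' = int (w mod p)"
  have d1: "int p dvd int c + int (s t) * a - b" using assms(4) unfolding on_dvd a_def b_def by blast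
  have d2: "int p dvd int c' + int (s t') * a - b" using assms(5) unfolding on_dvd a_def b_def by blast
  have d3: "int p dvd int c + int (s t) * a' - b'" using assms(6) unfolding on_dvd a'_def b'_def by blast
  have d4: "int p dvd int c' + int (s t') * a' - b'" using assms(7) unfolding on_dvd a'_def b'_def by blast
  have "int p dvd (int c + int (s t) * a - b) - (int c' + int (s t') * a - b) - (int c + int (s t) * a' - b') + (int c' + int (s t') * a' - b')"
    using d1 d2 d3 d4 by (rule dvd_comb4)
  moreover have "(int c + int (s t) * a - b) - (int c' + int (s t') * a - b) - (int c + int (s t) * a' - b') + (int c' + int (s t') * a' - b')
     = (int (s t) - int (s t')) * (a - a')" by (simp add: algebra_simps)
  ultimately have "int p dvd (int (s t) - int (s t')) * (a - a')" by simp
  moreover have pr: "prime (int p)" using p_prime by simp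
  ultimately have dd: "int p dvd (int (s t) - int (s t')) \<or> int p dvd (a - a')" using prime_dvd_mult_iff by blast
  have ne: "int (s t) - int (s t') \<noteq> 0" using s_inj assms(1-3) by auto
  have l1: "\<bar>int (s t) - int (s t')\<bar> < int p" using s_lt[OF assms(1)] s_lt[OF assms(2)] by (rule absdiff)
  have "z div p < r" "w div p < r" using row_lt[of z] row_lt[of w] assms(4,6) unfolding on_def by auto
  hence l2: "\<bar>a - a'\<bar> < int p" using r_lt unfolding a_def a'_def by (intro absdiff) auto
  have "\<not> int p dvd (int (s t) - int (s t'))" using small_dvd_zero[OF _ l1] ne by blast
  hence "int p dvd (a - a')" using dd by blast
  hence "a = a'" using small_dvd_zero[OF _ l2] by simp
  then show ?thesis using same_row[OF assms(4,6)] unfolding a_def a'_def by simp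
qed

lemma triangle: assumes "t1 < k" "t2 < k" "t3 < k" "t1 \<noteq> t2" "t1 \<noteq> t3" "t2 \<noteq> t3"
  "on t1 c1 P" "on t2 c2 P" "on t1 c1 Q" "on t3 c3 Q" "on t2 c2 R" "on t3 c3 R"
  shows "P = Q \<and> Q = R"
proof -
  define aP where "aP = int (P div p)"
  define aQ where "aQ = int (Q div p)"
  define aR where "aR = int (R div p)"
  define bP where "bP = int (P mod p)"
  define bQ where "bQ = int (Q mod p)"
  define bR where "bR = int (R mod p)"
  note defs = aP_def aQ_def aR_def bP_def bQ_def bR_def
  have e1: "int p dvd int c1 + int (s t1) * aP - bP" using assms(7) unfolding on_dvd defs by blast
  have e2: "int p dvd int c2 + int (s t2) * aP - bP" using assms(8) unfolding on_dvd defs by blast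
  have e3: "int p dvd int c1 + int (s t1) * aQ - bQ" using assms(9) unfolding on_dvd defs by blast
  have e4: "int p dvd int c3 + int (s t3) * aQ - bQ" using assms(10) unfolding on_dvd defs by blast
  have e5: "int p dvd int c2 + int (s t2) * aR - bR" using assms(11) unfolding on_dvd defs by blast
  have e6: "int p dvd int c3 + int (s t3) * aR - bR" using assms(12) unfolding on_dvd defs by blast
  have "int p dvd (int c1 + int (s t1) * aP - bP) - (int c2 + int (s t2) * aP - bP) - (int c1 + int (s t1) * aQ - bQ)
     + (int c3 + int (s t3) * aQ - bQ) + (int c2 + int (s t2) * aR - bR) - (int c3 + int (s t3) * aR - bR)"
    using e1 e2 e3 e4 e5 e6 by (rule dvd_comb6)
  moreover have "(int c1 + int (s t1) * aP - bP) - (int c2 + int (s t2) * aP - bP) - (int c1 + int (s t1) * aQ - bQ)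
     + (int c3 + int (s t3) * aQ - bQ) + (int c2 + int (s t2) * aR - bR) - (int c3 + int (s t3) * aR - bR)
     = (aP - aQ) * int (s t1) + (aR - aP) * int (s t2) + (aQ - aR) * int (s t3)" by (simp add: algebra_simps)
  ultimately have dv: "int p dvd (aP - aQ) * int (s t1) + (aR - aP) * int (s t2) + (aQ - aR) * int (s t3)" by simp
  have rows: "0 \<le> aP" "aP < int r" "0 \<le> aQ" "aQ < int r" "0 \<le> aR" "aR < int r"
    using row_lt[of P] row_lt[of Q] row_lt[of R] assms(7,9,11) unfolding on_def defs by auto
  have h1: "(aP - aQ) + (aR - aP) + (aQ - aR) = 0" by simp
  have h2: "\<bar>aP - aQ\<bar> < int r" "\<bar>aR - aP\<bar> < int r" "\<bar>aQ - aR\<bar> < int r" using rows by linarith+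
  have "aP - aQ = 0 \<and> aR - aP = 0" by (rule SC[OF assms(1-6) h1 h2 dv])
  hence "P div p = Q div p" "P div p = R div p" unfolding defs by auto
  then have "P = Q" "P = R" using same_row[OF assms(7,9)] same_row[OF assms(8,11)] by blast+
  then show ?thesis by blast
qed


lemma LS_image: "LS t i \<subseteq> (\<lambda>a. a * p + nat ((int (ic t i) + int (s t) * int a) mod int p)) ` {..<r}"
proof
  fix j assume j: "j \<in> LS t i"
  hence o: "on t (ic t i) j" by (simp add: on_LS)
  hence "j div p < r" using row_lt on_def by blast
  moreover have "j mod p = nat ((int (ic t i) + int (s t) * int (j div p)) mod int p)"
    using o unfolding on_def by simp
  moreover have "j = j div p * p + j mod p" by simp
  ultimately show "j \<in> (\<lambda>a. a * p + nat ((int (ic t i) + int (s t) * int a) mod int p)) ` {..<r}"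
    by (metis (no_types, lifting) image_eqI lessThan_iff)
qed

lemma LS_finite: "finite (LS t i)" using LS_sub finite_subset by blast

lemma LS_card: "card (LS t i) \<le> r"
proof -
  have "card (LS t i) \<le> card ((\<lambda>a. a * p + nat ((int (ic t i) + int (s t) * int a) mod int p)) ` {..<r})"
    by (rule card_mono[OF _ LS_image]) simp
  also have "\<dots> \<le> card {..<r}" by (rule card_image_le) simp
  finally show ?thesis by simp
qed

definition G :: "nat \<Rightarrow> nat \<Rightarrow> bit" where
  "G i j = (if j < n then (if i = j then 1 else 0)
            else if on ((j - n) div p) ((j - n) mod p) i then 1 else 0)"

definition par :: "nat \<Rightarrow> nat \<Rightarrow> nat" where
  "par t i = n + t * p + ic t i"

definition RS :: "nat \<Rightarrow> nat \<Rightarrow> nat set" where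
  "RS t i = insert (par t i) (LS t i - {i})"

lemma par_ge: "n \<le> par t i" unfolding par_def by simp

lemma par_lt: "t < k \<Longrightarrow> par t i < n + k * p"
proof -
  assume "t < k"
  hence "t * p + p \<le> k * p" by (metis mult_Suc Suc_le_eq mult_le_mono1 add.commute)
  then show ?thesis unfolding par_def using ic_lt[of t i] by linarith
qed

lemma par_inj: "par t i = par t' i' \<Longrightarrow> t = t' \<and> ic t i = ic t' i'"
proof -
  assume "par t i = par t' i'"
  hence e: "t * p + ic t i = t' * p + ic t' i'" unfolding par_def by simp
  have "(t * p + ic t i) div p = t" "(t' * p + ic t' i') div p = t'" using ic_lt ppos by simp_all
  with e have "t = t'" by simp
  with e show ?thesis by simp
qed

lemma enc_info: assumes "j < n" shows "encode n G x j = x j"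
proof -
  have "\<And>i. x i * G i j = (if i = j then x i else 0)" using assms by (simp add: G_def)
  hence "encode n G x j = (\<Sum>i<n. if i = j then x i else 0)" unfolding encode_def by simp
  also have "\<dots> = x j" using assms by simp
  finally show ?thesis .
qed

lemma enc_par: assumes "t < k" shows "encode n G x (par t i) = (\<Sum>i'\<in>LS t i. x i')"
proof -
  have "(par t i - n) div p = t" "(par t i - n) mod p = ic t i" unfolding par_def using ic_lt ppos by simp_all
  hence "encode n G x (par t i) = (\<Sum>i'<n. x i' * (if i' \<in> LS t i then 1 else 0))"
    unfolding encode_def G_def using par_ge[of t i] by (simp add: on_LS not_less)
  also have "\<dots> = (\<Sum>i'<n. if i' \<in> LS t i then x i' else 0)" by (intro sum.cong) auto
  also have "\<dots> = (\<Sum>i'\<in>{..<n} \<inter> LS t i. x i')" by (simp add: sum.inter_restrict)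
  also have "{..<n} \<inter> LS t i = LS t i" using LS_sub by blast
  finally show ?thesis .
qed

lemma bit_cancel: "(a::bit) + b + b = a" by (cases a; cases b) auto

lemma recover: assumes "t < k" "i < n" shows "recoverable_from n G i (RS t i)"
proof -
  define g where "g = (\<lambda>w::nat \<Rightarrow> bit. w (par t i) + (\<Sum>i'\<in>LS t i - {i}. w i'))"
  have "x i = g (\<lambda>j. if j \<in> RS t i then encode n G x j else 0)" for x
  proof -
    have "(\<Sum>i'\<in>LS t i - {i}. (\<lambda>j. if j \<in> RS t i then encode n G x j else 0) i') = (\<Sum>i'\<in>LS t i - {i}. x i')"
      by (intro sum.cong) (auto simp: RS_def LS_eq enc_info)
    moreover have h2: "(\<Sum>i'\<in>LS t i. x i') = x i + (\<Sum>i'\<in>LS t i - {i}. x i')"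
      by (rule sum.remove[OF LS_finite self_LS[OF assms(2)]])
    moreover have w1: "(\<lambda>j. if j \<in> RS t i then encode n G x j else 0) (par t i) = (\<Sum>i'\<in>LS t i. x i')"
      using enc_par[OF assms(1)] by (simp add: RS_def)
    ultimately show ?thesis unfolding g_def by (simp only: bit_cancel)
  qed
  then show ?thesis unfolding recoverable_from_def by blast
qed

lemma RS_card: "i < n \<Longrightarrow> card (RS t i) \<le> r"
proof -
  assume i: "i < n"
  have "card (RS t i) \<le> Suc (card (LS t i - {i}))" unfolding RS_def
    by (simp add: card_insert_le_m1 card_insert_if LS_finite)
  also have "\<dots> = card (LS t i)" using card_Suc_Diff1[OF LS_finite self_LS[OF i]] by simp
  finally show ?thesis using LS_card le_trans by blast
qed

lemma RS_sub: "t < k \<Longrightarrow> RS t i \<subseteq> {..<n + k * p}"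
  unfolding RS_def using par_lt LS_sub by fastforce


lemma on_self: "x < n \<Longrightarrow> on t (ic t x) x" using on_LS self_LS by blast

lemma U1: assumes "x < n" "y \<noteq> x" "t1 < k" "t2 < k" "y \<in> LS t1 x" "y \<in> LS t2 x" shows "t1 = t2"
proof (rule ccontr)
  assume "t1 \<noteq> t2"
  from two_lines[OF assms(3,4) this on_self[OF assms(1)] on_self[OF assms(1)]] assms(5,6)
  have "x = y" by (simp add: on_LS)
  with assms(2) show False by simp
qed

lemma U2: assumes "x < n" "y < n" "x \<noteq> y" "\<not> (\<exists>u<k. y \<in> LS u x)" "t1 < k" "t2 < k" "t' < k"
  "t1 \<noteq> t'" "t2 \<noteq> t'" "LS t1 x \<inter> LS t' y \<noteq> {}" "LS t2 x \<inter> LS t' y \<noteq> {}"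
  shows "t1 = t2"
proof (rule ccontr)
  assume ne: "t1 \<noteq> t2"
  obtain z1 where z1: "z1 \<in> LS t1 x" "z1 \<in> LS t' y" using assms(10) by blast
  obtain z2 where z2: "z2 \<in> LS t2 x" "z2 \<in> LS t' y" using assms(11) by blast
  have "x = z1 \<and> z1 = z2"
    by (rule triangle[OF assms(5,6,7) ne assms(8,9) on_self[OF assms(1)] on_self[OF assms(1)]])
       (use z1 z2 in \<open>simp_all add: on_LS\<close>)
  hence "x \<in> LS t' y" using z1 by simp
  hence "y \<in> LS t' x" using LS_sym assms(2) by blast
  with assms(4,7) show False by blast
qed

lemma DISJ: assumes "x < n" "y < n" "t < k" "t' < k"
  and nc: "x \<noteq> y \<Longrightarrow> y \<notin> LS t x \<and> x \<notin> LS t' y"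
  and nC1: "x = y \<Longrightarrow> t \<noteq> t'"
  and nC2: "x \<noteq> y \<Longrightarrow> t \<noteq> t' \<Longrightarrow> \<not> (\<exists>u<k. y \<in> LS u x) \<Longrightarrow> LS t x \<inter> LS t' y = {}"
  shows "RS t x \<inter> RS t' y = {}"
proof -
  have "par t x \<noteq> par t' y"
  proof
    assume "par t x = par t' y"
    hence "t = t' \<and> ic t x = ic t' y" by (rule par_inj)
    hence e1: "t = t'" and e2: "ic t x = ic t' y" by blast+
    from e2 have "ic t x = ic t y" unfolding e1 .
    note e1 this
    show False
    proof (cases "x = y")
      case True with nC1 \<open>t = t'\<close> show False by simp
    next
      case False
      hence "y \<in> LS t x" using \<open>ic t x = ic t y\<close> assms(2) by (simp add: LS_eq)
      with nc False show False by simp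
    qed
  qed
  moreover have "par t x \<notin> LS t' y" "par t' y \<notin> LS t x" using par_ge[of t x] par_ge[of t' y] by (auto simp: LS_eq)
  moreover have "(LS t x - {x}) \<inter> (LS t' y - {y}) = {}"
  proof (rule ccontr)
    assume "(LS t x - {x}) \<inter> (LS t' y - {y}) \<noteq> {}"
    then obtain z where z: "z \<in> LS t x" "z \<in> LS t' y" "z \<noteq> x" "z \<noteq> y" by blast
    show False
    proof (cases "x = y")
      case True
      hence "t \<noteq> t'" using nC1 by simp
      from two_lines[OF assms(3,4) this on_self[OF assms(1)] on_self[OF assms(1)]] z True
      have "x = z" by (simp add: on_LS)
      with z show False by simp
    next
      case xy: False
      show False
      proof (cases "t = t'")
        case True
        have "LS t z = LS t x" using LS_same z(1) by blast
        moreover have "LS t z = LS t y" using LS_same z(2) True by blast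
        ultimately have "LS t x = LS t y" by simp
        hence "y \<in> LS t x" using self_LS[OF assms(2)] by simp
        with nc xy show False by simp
      next
        case tt: False
        show False
        proof (cases "\<exists>u<k. y \<in> LS u x")
          case True
          then obtain u where u: "u < k" "y \<in> LS u x" by blast
          have "u \<noteq> t" using u nc xy by auto
          moreover have "x \<in> LS u y" using LS_sym u assms(1) by blast
          hence "u \<noteq> t'" using nc xy by auto
          moreover have "x = z \<and> z = y"
            by (rule triangle[OF assms(3) u(1) assms(4) \<open>u \<noteq> t\<close>[symmetric] tt \<open>u \<noteq> t'\<close> on_self[OF assms(1)] on_self[OF assms(1)]])
               (use z u on_self[OF assms(2)] in \<open>simp_all add: on_LS\<close>)
          ultimately show False using z by simp
        next
          case False
          have "LS t x \<inter> LS t' y = {}" by (rule nC2[OF xy tt False])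
          with z show False by blast
        qed
      qed
    qed
  qed
  ultimately show ?thesis unfolding RS_def by blast
qed


lemma single_rec: "i < n \<Longrightarrow> recoverable_from n G i {i}"
  unfolding recoverable_from_def
  by (rule exI[of _ "\<lambda>w. w i"]) (simp add: enc_info)

lemma batch: "batch_code r k n (n + k * p) G"
  unfolding batch_code_def
proof (intro allI impI)
  fix "is" :: "nat list" assume H: "length is = k \<and> set is \<subseteq> {..<n}"
  define pt where "pt j = is ! j" for j
  define nf where "nf j \<longleftrightarrow> is ! j \<in> set (take j is)" for j
  define C where "C x t y t' \<longleftrightarrow> (x = y \<and> t = t') \<or> (x \<noteq> y \<and> t \<noteq> t' \<and> \<not> (\<exists>u<k. y \<in> LS u x) \<and> LS t x \<inter> LS t' y \<noteq> {})" for x t y t'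
  define Forb where "Forb j f = (if nf j then {t. \<exists>j''<k. pt j'' \<noteq> pt j \<and> pt j'' \<in> LS t (pt j)}
     \<union> {t. \<exists>j'<j. nf j' \<and> f j' < k \<and> C (pt j) t (pt j') (f j')} else {})" for j and f :: "nat \<Rightarrow> nat"
  have ptn: "pt j < n" if "j < k" for j using H that nth_mem unfolding pt_def by fastforce
  have cardb: "card (Forb j f \<inter> {..<k}) < k" if j: "j < k" for j f
  proof (cases "nf j")
    case False then show ?thesis using j by (simp add: Forb_def)
  next
    case True
    define x where "x = pt j"
    define P where "P j'' t \<longleftrightarrow> t < k \<and> ((pt j'' \<noteq> x \<and> pt j'' \<in> LS t x) \<or> (j'' < j \<and> nf j'' \<and> f j'' < k \<and> C x t (pt j'') (f j'')))" for j'' t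
    have sub: "Forb j f \<inter> {..<k} \<subseteq> (\<Union>j''\<in>{..<k} - {j}. {t. P j'' t})"
    proof
      fix t assume "t \<in> Forb j f \<inter> {..<k}"
      hence tk: "t < k" and "(\<exists>j''<k. pt j'' \<noteq> x \<and> pt j'' \<in> LS t x) \<or> (\<exists>j'<j. nf j' \<and> f j' < k \<and> C x t (pt j') (f j'))"
        using True by (auto simp: Forb_def x_def)
      then show "t \<in> (\<Union>j''\<in>{..<k} - {j}. {t. P j'' t})"
      proof (elim disjE exE conjE)
        fix j'' assume "j'' < k" "pt j'' \<noteq> x" "pt j'' \<in> LS t x"
        moreover have "j'' \<noteq> j" using \<open>pt j'' \<noteq> x\<close> x_def by auto
        ultimately show ?thesis using tk unfolding P_def by blast
      next
        fix j' assume "j' < j" "nf j'" "f j' < k" "C x t (pt j') (f j')"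
        moreover have "j' < k" "j' \<noteq> j" using \<open>j' < j\<close> j by auto
        ultimately show ?thesis using tk unfolding P_def by blast
      qed
    qed
    have one: "card {t. P j'' t} \<le> 1" for j''
    proof -
      have fin: "finite {t. P j'' t}" by (rule finite_subset[of _ "{..<k}"]) (auto simp: P_def)
      have "t1 = t2" if t1: "P j'' t1" and t2: "P j'' t2" for t1 t2
      proof -
        define y where "y = pt j''"
        have xn: "x < n" using ptn j x_def by simp
        show ?thesis
        proof (cases "y = x")
          case True
          then show ?thesis using t1 t2 unfolding P_def C_def y_def by auto
        next
          case yx: False
          show ?thesis
          proof (cases "\<exists>u<k. y \<in> LS u x")
            case True
            hence "\<not> C x t y t'" for t t' using yx unfolding C_def by auto
            hence "y \<in> LS t1 x" "y \<in> LS t2 x" using t1 t2 unfolding P_def y_def by auto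
            then show ?thesis using U1[OF xn yx] t1 t2 unfolding P_def by blast
          next
            case ncol: False
            have a1: "t1 < k" "j'' < j" "nf j''" "f j'' < k" "C x t1 y (f j'')"
              using t1 ncol unfolding P_def y_def by auto
            have a2: "t2 < k" "C x t2 y (f j'')"
              using t2 ncol unfolding P_def y_def by auto
            have yn: "y < n" using ptn a1(2) j y_def by simp
            show ?thesis
              by (rule U2[OF xn yn _ ncol a1(1) a2(1) a1(4)]) (use a1 a2 yx in \<open>auto simp: C_def\<close>)
          qed
        qed
      qed
      then show ?thesis using fin by (simp add: card_le_Suc0_iff_eq)
    qed
    have "card (Forb j f \<inter> {..<k}) \<le> card (\<Union>j''\<in>{..<k} - {j}. {t. P j'' t})"
      by (rule card_mono[OF _ sub]) (auto simp: P_def)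
    also have "\<dots> \<le> (\<Sum>j''\<in>{..<k} - {j}. card {t. P j'' t})" by (rule card_UN_le) simp
    also have "\<dots> \<le> (\<Sum>j''\<in>{..<k} - {j}. 1)" by (rule sum_mono) (rule one)
    also have "\<dots> = k - 1" using j by simp
    finally show ?thesis using j by linarith
  qed
  have loc: "Forb j f = Forb j g" if "\<forall>j'<j. f j' = g j'" for j f g
    using that unfolding Forb_def by auto
  obtain f where f: "\<forall>j<k. f j < k \<and> f j \<notin> Forb j f"
    using greedy[of k Forb k, OF cardb loc] by blast
  have fa: "pt j'' \<notin> LS (f j) (pt j)" if "j < k" "nf j" "j'' < k" "pt j'' \<noteq> pt j" for j j''
  proof -
    have "f j \<notin> Forb j f" using f that(1) by blast
    hence "f j \<notin> {t. \<exists>j''<k. pt j'' \<noteq> pt j \<and> pt j'' \<in> LS t (pt j)}" using that(2) unfolding Forb_def by simp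
    thus ?thesis using that(3,4) by blast
  qed
  have fb: "\<not> C (pt j) (f j) (pt j') (f j')" if "j < k" "nf j" "j' < j" "nf j'" for j j'
  proof -
    have "f j \<notin> Forb j f" using f that(1) by blast
    moreover have "Forb j f = {t. \<exists>j''<k. pt j'' \<noteq> pt j \<and> pt j'' \<in> LS t (pt j)} \<union> {t. \<exists>j'<j. nf j' \<and> f j' < k \<and> C (pt j) t (pt j') (f j')}"
      unfolding Forb_def by (simp only: that(2) if_True)
    ultimately have "f j \<notin> {t. \<exists>j''<k. pt j'' \<noteq> pt j \<and> pt j'' \<in> LS t (pt j)} \<union> {t. \<exists>j'<j. nf j' \<and> f j' < k \<and> C (pt j) t (pt j') (f j')}" by (simp only: not_False_eq_True)
    hence nm: "f j \<notin> {t. \<exists>j'<j. nf j' \<and> f j' < k \<and> C (pt j) t (pt j') (f j')}" by (rule contrapos_nn) (rule UnI2)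
    have "j' < k" using that(1,3) by simp
    hence fk: "f j' < k" using f by blast
    from nm have "\<not> (\<exists>j''. j'' < j \<and> nf j'' \<and> f j'' < k \<and> C (pt j) (f j) (pt j'') (f j''))"
      by (simp only: mem_Collect_eq not_False_eq_True)
    hence "\<not> (j' < j \<and> nf j' \<and> f j' < k \<and> C (pt j) (f j) (pt j') (f j'))"
      by (rule contrapos_nn) (rule exI)
    thus ?thesis by (simp only: that(3) that(4) fk simp_thms)
  qed
  define R where "R j = (if nf j then RS (f j) (pt j) else {pt j})" for j
  have props: "R j \<subseteq> {..<n + k * p} \<and> card (R j) \<le> r \<and> recoverable_from n G (is ! j) (R j)" if "j < k" for j
  proof (cases "nf j")
    case True
    then show ?thesis using RS_sub[of "f j"] RS_card[OF ptn] recover[OF _ ptn] f that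
      unfolding R_def pt_def by auto
  next
    case False
    then show ?thesis using ptn[OF that] single_rec[OF ptn[OF that]] rpos
      unfolding R_def pt_def by auto
  qed
  have C1: "C x t y t'" if "x = y" "t = t'" for x y t t' unfolding C_def using that by simp
  have C2: "C x t y t'" if "x \<noteq> y" "t \<noteq> t'" "\<not> (\<exists>u<k. y \<in> LS u x)" "LS t x \<inter> LS t' y \<noteq> {}" for x y t t'
    unfolding C_def using that by blast
  have notin: "y \<notin> RS t x" if "y < n" "y = x \<or> y \<notin> LS t x" for x y t
  proof
    assume "y \<in> RS t x"
    moreover have "y \<noteq> par t x" using par_ge[of t x] that(1) by simp
    ultimately have "y \<in> LS t x" "y \<noteq> x" unfolding RS_def by auto
    with that(2) show False by blast
  qed
  have disj: "R j \<inter> R j' = {}" if jk: "j < k" and jj: "j' < j" for j j'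
  proof -
    have j'k: "j' < k" using jk jj by simp
    have xn: "pt j < n" "pt j' < n" using ptn jk j'k by auto
    show ?thesis
    proof (cases "nf j")
      case nfj: True
      show ?thesis
      proof (cases "nf j'")
        case nfj': True
        have nc: "\<not> C (pt j) (f j) (pt j') (f j')" by (rule fb[OF jk nfj jj nfj'])
        have "RS (f j) (pt j) \<inter> RS (f j') (pt j') = {}"
        proof (rule DISJ[OF xn])
          show "f j < k" "f j' < k" using f jk j'k by auto
          show "pt j' \<notin> LS (f j) (pt j) \<and> pt j \<notin> LS (f j') (pt j')" if ne: "pt j \<noteq> pt j'"
          proof
            show "pt j' \<notin> LS (f j) (pt j)" by (rule fa[OF jk nfj j'k]) (use ne in simp)
            show "pt j \<notin> LS (f j') (pt j')" by (rule fa[OF j'k nfj' jk]) (use ne in simp)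
          qed
          show "f j \<noteq> f j'" if "pt j = pt j'"
          proof
            assume "f j = f j'"
            with C1[OF that this] nc show False by simp
          qed
          show "LS (f j) (pt j) \<inter> LS (f j') (pt j') = {}"
            if a: "pt j \<noteq> pt j'" "f j \<noteq> f j'" "\<not> (\<exists>u<k. pt j' \<in> LS u (pt j))"
          proof (rule ccontr)
            assume "LS (f j) (pt j) \<inter> LS (f j') (pt j') \<noteq> {}"
            with C2[OF a this] nc show False by simp
          qed
        qed
        then show ?thesis unfolding R_def using nfj nfj' by simp
      next
        case nfj': False
        have "pt j' = pt j \<or> pt j' \<notin> LS (f j) (pt j)" using fa[OF jk nfj j'k] by blast
        hence "pt j' \<notin> RS (f j) (pt j)" by (rule notin[OF xn(2)])
        then show ?thesis unfolding R_def using nfj nfj' by simp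
      qed
    next
      case nfj: False
      show ?thesis
      proof (cases "nf j'")
        case nfj': True
        have "pt j = pt j' \<or> pt j \<notin> LS (f j') (pt j')" using fa[OF j'k nfj' jk] by blast
        hence "pt j \<notin> RS (f j') (pt j')" by (rule notin[OF xn(1)])
        then show ?thesis unfolding R_def using nfj nfj' by simp
      next
        case nfj': False
        have "pt j \<noteq> pt j'"
        proof
          assume e: "pt j = pt j'"
          have lt: "j < length is" using jk H by simp
          have "take j is ! j' \<in> set (take j is)" by (rule nth_mem) (use jj lt in simp)
          moreover have "take j is ! j' = is ! j'" using jj by simp
          ultimately have "is ! j \<in> set (take j is)" using e unfolding pt_def by simp
          with nfj show False unfolding nf_def by simp
        qed
        then show ?thesis unfolding R_def using nfj nfj' by simp
      qed
    qed
  qed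
  show "\<exists>R. (\<forall>j<k. R j \<subseteq> {..<n + k * p} \<and> card (R j) \<le> r \<and> recoverable_from n G (is ! j) (R j)) \<and>
        (\<forall>j<k. \<forall>j'<k. j \<noteq> j' \<longrightarrow> R j \<inter> R j' = {})"
  proof (intro exI[of _ R] conjI allI impI)
    fix j assume "j < k" then show "R j \<subseteq> {..<n + k * p}" "card (R j) \<le> r" "recoverable_from n G (is ! j) (R j)"
      using props by auto
  next
    fix j j' assume "j < k" "j' < k" "j \<noteq> j'"
    then show "R j \<inter> R j' = {}"
      using disj[of j j'] disj[of j' j] by (cases "j' < j") (auto simp: Int_commute)
  qed
qed

end

theorem theorem11:
  fixes r k :: nat
  assumes "0 < r" and "0 < k"
  defines "p \<equiv> (LEAST q :: nat. prime q \<and> 2 * k^2 * r^2 < q)"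
  defines "n \<equiv> r * p"
  shows "\<exists>N G. batch_code r k n N G \<and> real n / real N = real r / real (r + k)
                \<and> N - n = k * p"
proof -
  have ex: "\<exists>q. prime q \<and> 2 * k^2 * r^2 < q" using bigger_prime by blast
  have pP: "prime p \<and> 2 * k^2 * r^2 < p" unfolding p_def by (rule LeastI_ex[OF ex])
  hence pr: "prime p" and big: "2 * k^2 * r^2 < p" by auto
  have "r \<le> k^2 * r^2"
  proof -
    have "1 * r \<le> k^2 * (r * r)" using assms(1,2) by (intro mult_le_mono) (auto simp: power2_eq_square)
    thus ?thesis by (simp add: power2_eq_square)
  qed
  hence rp: "r < p" using big by linarith
  obtain s where s1: "\<forall>t<k. s t < p" and s2: "\<forall>t t'. t < k \<longrightarrow> t' < k \<longrightarrow> s t = s t' \<longrightarrow> t = t'"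
    and s3: "scond r p k s"
    using slopes_ind[OF pr assms(1) big, of k] by auto
  interpret g: geo r k p s
  proof
    show "prime p" "0 < r" "0 < k" "r < p" by (fact pr assms(1) assms(2) rp)+
    show "\<And>t. t < k \<Longrightarrow> s t < p" using s1 by blast
    show "\<And>t t'. t < k \<Longrightarrow> t' < k \<Longrightarrow> s t = s t' \<Longrightarrow> t = t'" using s2 by blast
    show "\<And>t1 t2 t3 d1 d2 d3. t1 < k \<Longrightarrow> t2 < k \<Longrightarrow> t3 < k \<Longrightarrow> t1 \<noteq> t2 \<Longrightarrow> t1 \<noteq> t3 \<Longrightarrow> t2 \<noteq> t3
     \<Longrightarrow> d1 + d2 + d3 = 0 \<Longrightarrow> \<bar>d1\<bar> < int r \<Longrightarrow> \<bar>d2\<bar> < int r \<Longrightarrow> \<bar>d3\<bar> < int r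
     \<Longrightarrow> int p dvd (d1 * int (s t1) + d2 * int (s t2) + d3 * int (s t3)) \<Longrightarrow> d1 = 0 \<and> d2 = 0"
      using s3 unfolding scond_def by blast
  qed
  have bc: "batch_code r k n (n + k * p) g.G" using g.batch unfolding g.n_def n_def .
  have pp: "0 < p" using rp by simp
  have "real n / real (n + k * p) = (real r * real p) / (real (r + k) * real p)"
    unfolding n_def by (simp add: algebra_simps)
  also have "\<dots> = real r / real (r + k)" using pp by simp
  finally have ratio: "real n / real (n + k * p) = real r / real (r + k)" .
  have "n + k * p - n = k * p" by simp
  with bc ratio show ?thesis by blast
qed

end
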